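(* Consider the excludable public good problem, and let $\mathcal A$ be the VCG-based mechanism with a normalized, monotone, symmetric function $H:2^N\to\mathbb{R}_{\ge0}$. Suppose that $\mathcal A$ always covers the incurred cost and is a $\rho$-approximation to the social cost for some finite $\rho$. Then for every nonempty $S\subseteq N$ and every $i\in S$, $H(S)-H(S\setminus\{i\})\ge\frac1{|S|}$.
   Context: Excludable public good problem: players $N=\{1,\dots,n\}$, each player $i$ has a private value $v_i\ge0$ for being served; an outcome is a set $S\subseteq N$ of served players; the cost is $C(S)=1$ for $S\ne\emptyset$ and $C(\emptyset)=0$. $H$ is normalized if $H(\emptyset)=0$, monotone if $S\subseteq T\Rightarrow H(S)\le H(T)$, symmetric if $H(S)=H(T)$ whenever $|S|=|T|$. The VCG-based mechanism with $H$ outputs $ALG\in\arg\max_{S\subseteq N}\sum_{i\in S}v_i-H(S)$ (some tie-breaking), for each $i$ computes $ALG^{-i}\in\arg\max_{S\subseteq N\setminus\{i\}}\sum_{j\in S}v_j-H(S)$, and charges $p_i=\left[\sum_{j\in ALG^{-i}}v_j-H(ALG^{-i})\right]-\left[\sum_{j\in ALG\setminus\{i\}}v_j-H(ALG)\right]$. It always covers the cost if $\sum_ip_i\ge C(ALG)$ for every profile. Social cost: $\pi(S)=C(S)+\sum_{i\notin S}v_i$; a $\rho$-approximation means $\pi(ALG)\le\rho\min_T\pi(T)$ on every profile. *)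

theory Defs
  imports Complex_Main
begin

definition players :: "nat \<Rightarrow> nat set" where
  "players n = {1..n}"

definition valid_profile :: "nat \<Rightarrow> (nat \<Rightarrow> real) \<Rightarrow> bool" where
  "valid_profile n v \<longleftrightarrow> (\<forall>i\<in>players n. v i \<ge> 0)"

definition cost :: "nat set \<Rightarrow> real" where
  "cost S = (if S = {} then 0 else 1)"

definition welfareH :: "(nat \<Rightarrow> real) \<Rightarrow> (nat set \<Rightarrow> real) \<Rightarrow> nat set \<Rightarrow> real" where
  "welfareH v H S = (\<Sum>j\<in>S. v j) - H S"

definition is_argmax :: "nat set \<Rightarrow> (nat \<Rightarrow> real) \<Rightarrow> (nat set \<Rightarrow> real) \<Rightarrow> nat set \<Rightarrow> bool" where
  "is_argmax M v H S \<longleftrightarrow> S \<subseteq> M \<and> (\<forall>T. T \<subseteq> M \<longrightarrow> welfareH v H T \<le> welfareH v H S)"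

definition payment :: "(nat \<Rightarrow> real) \<Rightarrow> (nat set \<Rightarrow> real) \<Rightarrow> nat set \<Rightarrow> nat set \<Rightarrow> nat \<Rightarrow> real" where
  "payment v H ALG ALGmi i = welfareH v H ALGmi - ((\<Sum>j\<in>ALG - {i}. v j) - H ALG)"

definition social_cost :: "nat \<Rightarrow> (nat \<Rightarrow> real) \<Rightarrow> nat set \<Rightarrow> real" where
  "social_cost n v S = cost S + (\<Sum>i\<in>players n - S. v i)"

end

theory Submission
  imports Defs
begin

theorem claim5p2:
  fixes n :: nat
    and H :: "nat set \<Rightarrow> real"
    and alg :: "(nat \<Rightarrow> real) \<Rightarrow> nat set"
    and alg_minus :: "(nat \<Rightarrow> real) \<Rightarrow> nat \<Rightarrow> nat set"
    and \<rho> :: real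
  assumes H_nonneg: "\<forall>S. S \<subseteq> players n \<longrightarrow> H S \<ge> 0"
    and H_normalized: "H {} = 0"
    and H_monotone: "\<forall>S T. S \<subseteq> T \<and> T \<subseteq> players n \<longrightarrow> H S \<le> H T"
    and H_symmetric: "\<forall>S T. S \<subseteq> players n \<and> T \<subseteq> players n \<and> card S = card T \<longrightarrow> H S = H T"
    and alg_opt: "\<forall>v. valid_profile n v \<longrightarrow> is_argmax (players n) v H (alg v)"
    and alg_minus_opt: "\<forall>v i. valid_profile n v \<and> i \<in> players n \<longrightarrow>
                           is_argmax (players n - {i}) v H (alg_minus v i)"
    and covers_cost: "\<forall>v. valid_profile n v \<longrightarrow>
           (\<Sum>i\<in>players n. payment v H (alg v) (alg_minus v i) i) \<ge> cost (alg v)"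
    and approx: "\<forall>v. valid_profile n v \<longrightarrow>
           social_cost n v (alg v) \<le> \<rho> * Min (social_cost n v ` Pow (players n))"
  shows "\<forall>S i. S \<subseteq> players n \<and> S \<noteq> {} \<and> i \<in> S \<longrightarrow>
           H S - H (S - {i}) \<ge> 1 / real (card S)"
proof (intro allI impI)
  fix S i assume asm: "S \<subseteq> players n \<and> S \<noteq> {} \<and> i \<in> S"
  hence SP: "S \<subseteq> players n" and Sne: "S \<noteq> {}" and iS: "i \<in> S" by auto
  have finP: "finite (players n)" by (simp add: players_def)
  have finS: "finite S" using SP finP finite_subset by blast
  define k where "k = card S"
  have k1: "k \<ge> 1" using finS Sne k_def by (simp add: Suc_le_eq card_gt_0_iff)
  define c where "c = H (players n) + 1"
  have c1: "c \<ge> 1" using H_nonneg[rule_format, of "players n"] c_def by simp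
  define v where "v = (\<lambda>j. if j \<in> S then c else (0::real))"
  have valid: "valid_profile n v" unfolding valid_profile_def v_def using c1 by auto
  have sumv: "\<And>T. finite T \<Longrightarrow> sum v T = c * real (card (T \<inter> S))"
  proof -
    fix T :: "nat set" assume "finite T"
    have "sum v T = sum (\<lambda>x. if x \<in> S then v x else 0) T" by (rule sum.cong) (auto simp: v_def)
    hence "sum v T = sum v (T \<inter> S)" using sum.inter_restrict[OF \<open>finite T\<close>, of v S] by linarith
    also have "\<dots> = c * real (card (T \<inter> S))" by (simp add: v_def)
    finally show "sum v T = c * real (card (T \<inter> S))" .
  qed
  define A where "A = alg v"
  have argA: "is_argmax (players n) v H A" using alg_opt valid A_def by auto
  have AP: "A \<subseteq> players n" using argA is_argmax_def by auto
  have finA: "finite A" using AP finP finite_subset by blast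
  have WS: "welfareH v H S \<le> welfareH v H A" using argA SP is_argmax_def by auto
  have wS: "welfareH v H S = c * k - H S"
    unfolding welfareH_def using sumv[OF finS] k_def by simp
  have HS: "H S \<le> H (players n)" using H_monotone[rule_format, of S "players n"] SP by simp
  have Ane: "A \<noteq> {}"
  proof
    assume "A = {}"
    hence "welfareH v H A = 0" by (simp add: welfareH_def H_normalized)
    moreover have "c * k \<ge> c" using k1 c1 by simp
    ultimately show False using WS wS HS c_def by linarith
  qed
  have pay_bd: "\<And>j. payment v H A (alg_minus v j) j \<le>
      welfareH v H (alg_minus v j) - welfareH v H A + v j"
  proof -
    fix j
    have "sum v A \<le> sum v (A - {j}) + v j"
    proof (cases "j \<in> A")
      case True thus ?thesis using finA sum.remove[OF finA True, of v] by simp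
    next
      case False
      hence "A - {j} = A" by auto
      moreover have "v j \<ge> 0" using c1 by (simp add: v_def)
      ultimately show ?thesis by simp
    qed
    thus "payment v H A (alg_minus v j) j \<le> welfareH v H (alg_minus v j) - welfareH v H A + v j"
      unfolding payment_def welfareH_def by simp
  qed
  define d where "d = H S - H (S - {i})"
  have pj: "\<And>j. j \<in> players n \<Longrightarrow>
     payment v H A (alg_minus v j) j \<le> (if j \<in> S then d else 0)"
  proof -
    fix j assume jP: "j \<in> players n"
    define T where "T = alg_minus v j"
    have argT: "is_argmax (players n - {j}) v H T" using alg_minus_opt valid jP T_def by auto
    have TP: "T \<subseteq> players n - {j}" using argT is_argmax_def by auto
    have finT: "finite T" using TP finP finite_subset by blast
    show "payment v H A (alg_minus v j) j \<le> (if j \<in> S then d else 0)"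
    proof (cases "j \<in> S")
      case False
      have "welfareH v H T \<le> welfareH v H A" using argA TP is_argmax_def by auto
      moreover have "v j = 0" using False v_def by simp
      ultimately show ?thesis using pay_bd[of j] False T_def by simp
    next
      case True
      have HTS: "H (T \<inter> S) \<le> H T" using H_monotone[rule_format, of "T \<inter> S" T] TP by auto
      have sub: "T \<inter> S \<subseteq> S - {j}" using TP by auto
      have finSj: "finite (S - {j})" using finS by simp
      have cSj: "card (S - {j}) = k - 1" using True finS k_def by simp
      have cle: "card (T \<inter> S) \<le> k - 1" using card_mono[OF finSj sub] cSj by simp
      have HSj: "H (S - {j}) \<le> H (players n)" using H_monotone[rule_format, of "S - {j}" "players n"] SP by auto
      have Hsym: "H (S - {j}) = H (S - {i})"
      proof -
        have "card (S - {j}) = card (S - {i})" using True iS finS by simp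
        moreover have "S - {j} \<subseteq> players n" "S - {i} \<subseteq> players n" using SP by auto
        ultimately show ?thesis using H_symmetric[rule_format, of "S - {j}" "S - {i}"] by simp
      qed
      have wT: "welfareH v H T = c * real (card (T \<inter> S)) - H T"
        unfolding welfareH_def using sumv[OF finT] by simp
      have bound: "welfareH v H T \<le> c * (real k - 1) - H (S - {j})"
      proof (cases "card (T \<inter> S) = k - 1")
        case True
        hence "T \<inter> S = S - {j}" using card_subset_eq[OF finSj sub] cSj by simp
        thus ?thesis using wT HTS True k1 by (simp add: of_nat_diff)
      next
        case False
        hence "real (card (T \<inter> S)) \<le> real k - 2" using cle k1 by linarith
        hence "c * real (card (T \<inter> S)) \<le> c * (real k - 2)" using c1 by (simp add: mult_left_mono)
        moreover have "H (T \<inter> S) \<ge> 0" using H_nonneg[rule_format, of "T \<inter> S"] SP by auto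
        ultimately show ?thesis using wT HTS HSj c_def by (simp add: algebra_simps)
      qed
      have "v j = c" using True v_def by simp
      hence "payment v H A (alg_minus v j) j \<le> c * (real k - 1) - H (S - {j}) - (c * k - H S) + c"
        using pay_bd[of j] bound WS wS unfolding T_def by linarith
      also have "\<dots> = d" using Hsym d_def by (simp add: algebra_simps)
      finally show ?thesis using True by simp
    qed
  qed
  have "cost A \<le> (\<Sum>j\<in>players n. payment v H A (alg_minus v j) j)"
    using covers_cost valid A_def by auto
  also have "\<dots> \<le> (\<Sum>j\<in>players n. if j \<in> S then d else 0)"
    by (rule sum_mono) (use pj in auto)
  also have "\<dots> = (\<Sum>j\<in>players n \<inter> S. d)" using sum.inter_restrict[OF finP, of "\<lambda>_. d" S] by simp
  also have "\<dots> = real k * d" using SP k_def by (simp add: Int_absorb1)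
  finally have "1 \<le> real k * d" using Ane by (simp add: cost_def)
  hence "1 / real k \<le> d" using k1 by (simp add: divide_le_eq mult.commute)
  thus "H S - H (S - {i}) \<ge> 1 / real (card S)" using d_def k_def by simp
qed

end
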